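(* Let $\mathcal{N}=(D,P)$ be a broadcast network with client $P=(Q,I,\delta)$, let $m\le |Q|$ and $s_1,\dots,s_m\in Q$. There is a cycle $(\{s_1\},\dots,\{s_m\})\to_G^+(\{s_1\},\dots,\{s_m\})$ (a path with at least one edge) in the graph $G$ if and only if there is a configuration $c$ with $\mathrm{Set}(c)=\{s_1,\dots,s_m\}$ and $c\to^+ c$.
   Context: A broadcast network is a pair $\mathcal{N}=(D,P)$ where $D$ is a finite set of messages and $P=(Q,I,\delta)$ is a finite automaton with transition relation $\delta\subseteq Q\times \mathrm{Ops}(D)\times Q$, $\mathrm{Ops}(D)=\{!a,\ ?a : a\in D\}$; write $q\xrightarrow{o}q'$ for $(q,o,q')\in\delta$. A configuration is a tuple $c\in Q^k$, $k\in\mathbb{N}$, with entries $c[i]$ and set of occurring states $\mathrm{Set}(c)$. For $c,c'\in Q^k$ and $a\in D$, $c\xrightarrow{a}c'$ holds if some index $i$ has $c[i]\xrightarrow{!a}c'[i]$, there is $R\subseteq[1..k]\setminus\{i\}$ with $c[j]\xrightarrow{?a}c'[j]$ for all $j\in R$, and $c[j]=c'[j]$ for $j\notin R\cup\{i\}$; $c\to^+c'$ means a sequence of at least one such transition. For $S\subseteq Q$ and $a\in D$ let $\mathrm{Post}_{?a}(S)=\{r'\in Q: \exists r\in S,\ r\xrightarrow{?a}r'\}$ and $\mathrm{Enabled}_{?a}(S)=\{r\in S : \mathrm{Post}_{?a}(\{r\})\neq\emptyset\}$. The graph $G=(V,\to_G)$ has vertex set $V=\bigcup_{k\le|Q|}(2^Q)^k$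 (tuples of sets of states). There is an edge $(S_1,\dots,S_k)\to_G(S'_1,\dots,S'_k)$ iff: (1) there are $j\in[1..k]$, $s\in S_j$, $s'\in S'_j$, $a\in D$ with $s\xrightarrow{!a}s'$; (2) for each $i\in[1..k]$ there are $\mathrm{Gen}_i\subseteq\mathrm{Post}_{?a}(S_i)$ and $\mathrm{Kill}_i\subseteq\mathrm{Enabled}_{?a}(S_i)$ such that $S'_i=(S_i\setminus\mathrm{Kill}_i)\cup\mathrm{Gen}_i$ for $i\neq j$ and $S'_j=(U_j\setminus\mathrm{Kill}_j)\cup\mathrm{Gen}_j\cup\{s'\}$, where $U_j$ is either $S_j$ or $S_j\setminus\{s\}$; (3) for each $i\in[1..k]$ and each $q\in\mathrm{Kill}_i$, $\mathrm{Post}_{?a}(\{q\})\cap\mathrm{Gen}_i\neq\emptyset$. *)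

theory Defs
  imports Main
begin

datatype 'd op = Send 'd | Recv 'd

definition Ops :: "'d set \<Rightarrow> 'd op set" where
  "Ops D = Send ` D \<union> Recv ` D"

definition broadcast_network ::
  "'d set \<Rightarrow> 'q set \<Rightarrow> 'q set \<Rightarrow> ('q \<times> 'd op \<times> 'q) set \<Rightarrow> bool" where
  "broadcast_network D Q I delta \<longleftrightarrow>
     finite D \<and> finite Q \<and> I \<subseteq> Q \<and> delta \<subseteq> Q \<times> Ops D \<times> Q"

definition conf_step_lbl ::
  "'d set \<Rightarrow> 'q set \<Rightarrow> ('q \<times> 'd op \<times> 'q) set \<Rightarrow> 'd \<Rightarrow> 'q list \<Rightarrow> 'q list \<Rightarrow> bool" where
  "conf_step_lbl D Q delta a c c' \<longleftrightarrow>
     a \<in> D \<and> length c = length c' \<and> set c \<subseteq> Q \<and> set c' \<subseteq> Q \<and>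
     (\<exists>i < length c. (c ! i, Send a, c' ! i) \<in> delta \<and>
        (\<exists>R \<subseteq> {0..<length c} - {i}.
           (\<forall>j \<in> R. (c ! j, Recv a, c' ! j) \<in> delta) \<and>
           (\<forall>j < length c. j \<notin> R \<and> j \<noteq> i \<longrightarrow> c' ! j = c ! j)))"

definition conf_step ::
  "'d set \<Rightarrow> 'q set \<Rightarrow> ('q \<times> 'd op \<times> 'q) set \<Rightarrow> 'q list \<Rightarrow> 'q list \<Rightarrow> bool" where
  "conf_step D Q delta c c' \<longleftrightarrow> (\<exists>a. conf_step_lbl D Q delta a c c')"

definition Post_recv :: "('q \<times> 'd op \<times> 'q) set \<Rightarrow> 'd \<Rightarrow> 'q set \<Rightarrow> 'q set" where
  "Post_recv delta a S = {r'. \<exists>r \<in> S. (r, Recv a, r') \<in> delta}"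

definition Enabled_recv :: "('q \<times> 'd op \<times> 'q) set \<Rightarrow> 'd \<Rightarrow> 'q set \<Rightarrow> 'q set" where
  "Enabled_recv delta a S = {r \<in> S. Post_recv delta a {r} \<noteq> {}}"

definition G_vertex :: "'q set \<Rightarrow> 'q set list \<Rightarrow> bool" where
  "G_vertex Q Ss \<longleftrightarrow> length Ss \<le> card Q \<and> (\<forall>S \<in> set Ss. S \<subseteq> Q)"

definition G_edge ::
  "'d set \<Rightarrow> 'q set \<Rightarrow> ('q \<times> 'd op \<times> 'q) set \<Rightarrow> 'q set list \<Rightarrow> 'q set list \<Rightarrow> bool" where
  "G_edge D Q delta Ss Ss' \<longleftrightarrow>
     G_vertex Q Ss \<and> G_vertex Q Ss' \<and> length Ss' = length Ss \<and>
     (\<exists>j < length Ss. \<exists>s \<in> Ss ! j. \<exists>s' \<in> Ss' ! j. \<exists>a \<in> D.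
        (s, Send a, s') \<in> delta \<and>
        (\<exists>Gen Kill :: nat \<Rightarrow> 'q set.
           (\<forall>i < length Ss.
              Gen i \<subseteq> Post_recv delta a (Ss ! i) \<and>
              Kill i \<subseteq> Enabled_recv delta a (Ss ! i) \<and>
              (i \<noteq> j \<longrightarrow> Ss' ! i = (Ss ! i - Kill i) \<union> Gen i) \<and>
              (\<forall>q \<in> Kill i. Post_recv delta a {q} \<inter> Gen i \<noteq> {})) \<and>
           (\<exists>U. (U = Ss ! j \<or> U = Ss ! j - {s}) \<and>
                Ss' ! j = (U - Kill j) \<union> Gen j \<union> {s'})))"

end

theory Submission
  imports Defs
begin


lemma single_send:
  assumes "k < length x" "(x!k, Send a, v) \<in> delta" "a \<in> D" "set x \<subseteq> Q" "v \<in> Q"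
  shows "conf_step D Q delta x (x[k := v])"
  unfolding conf_step_def conf_step_lbl_def
proof (intro exI conjI)
  show "set (x[k := v]) \<subseteq> Q" using assms set_update_subset_insert by fastforce
  show "k < length x" by fact
  show "(x ! k, Send a, x[k := v] ! k) \<in> delta" using assms by simp
  show "{} \<subseteq> {0..<length x} - {k}" by simp
qed (use assms in auto)

lemma send_only_steps:
  assumes "length x = length y" "set x \<subseteq> Q" "set y \<subseteq> Q" "a \<in> D"
    "\<forall>k<length x. x!k = y!k \<or> (x!k, Send a, y!k) \<in> delta"
  shows "(conf_step D Q delta)\<^sup>*\<^sup>* x y"
  using assms
proof (induction "card {k. k < length x \<and> x!k \<noteq> y!k}" arbitrary: x rule: less_induct)
  case less
  show ?case
  proof (cases "\<exists>k<length x. x!k \<noteq> y!k")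
    case False
    then have "x = y" using less.prems(1) by (intro nth_equalityI) auto
    then show ?thesis by simp
  next
    case True
    then obtain k where k: "k < length x" "x!k \<noteq> y!k" by blast
    define x' where "x' = x[k := y!k]"
    have "y!k \<in> set y" using k less.prems(1) by simp
    then have yk: "y!k \<in> Q" using less.prems(3) by blast
    have st: "conf_step D Q delta x x'" unfolding x'_def
      apply (rule single_send[where a=a])
      using less.prems k yk by auto
    have sub: "{i. i < length x' \<and> x'!i \<noteq> y!i} \<subset> {i. i < length x \<and> x!i \<noteq> y!i}"
      using k unfolding x'_def by (auto simp: nth_list_update)
    have "card {i. i < length x' \<and> x'!i \<noteq> y!i} < card {i. i < length x \<and> x!i \<noteq> y!i}"
      by (rule psubset_card_mono[OF _ sub]) simp
    moreover have "set x' \<subseteq> Q" unfolding x'_def using less.prems(2) yk set_update_subset_insert[of x k "y!k"] by blast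
    moreover have "\<forall>i<length x'. x'!i = y!i \<or> (x'!i, Send a, y!i) \<in> delta"
      using less.prems(1,5) unfolding x'_def by (metis length_list_update nth_list_update_eq nth_list_update_neq)
    moreover have "length x' = length y" unfolding x'_def using less.prems by simp
    ultimately have "(conf_step D Q delta)\<^sup>*\<^sup>* x' y"
      using less.hyps[of x'] less.prems(3,4) by blast
    then show ?thesis using st by (meson converse_rtranclp_into_rtranclp)
  qed
qed

lemma main_step:
  assumes "length x = length y" "set x \<subseteq> Q" "set y \<subseteq> Q" "a \<in> D" "p < length x"
    "(x!p, Send a, y!p) \<in> delta"
    "\<forall>k<length x. x!k = y!k \<or> (x!k, Recv a, y!k) \<in> delta \<or> (x!k, Send a, y!k) \<in> delta"
  shows "(conf_step D Q delta)\<^sup>+\<^sup>+ x y"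
proof -
  define P where "P k \<longleftrightarrow> k = p \<or> (x!k \<noteq> y!k \<and> (x!k, Recv a, y!k) \<in> delta)" for k
  define z where "z = map (\<lambda>k. if P k then y!k else x!k) [0..<length x]"
  have lz: "length z = length x" unfolding z_def by simp
  have zn: "k < length x \<Longrightarrow> z!k = (if P k then y!k else x!k)" for k unfolding z_def by simp
  have zQ: "set z \<subseteq> Q"
  proof
    fix q assume "q \<in> set z"
    then obtain k where "k < length x" "q = z!k" using lz by (metis in_set_conv_nth)
    then show "q \<in> Q" using zn assms(1-3) by (metis nth_mem subsetD)
  qed
  define R where "R = {k. k < length x \<and> k \<noteq> p \<and> P k}"
  have "conf_step D Q delta x z"
    unfolding conf_step_def conf_step_lbl_def
  proof (intro exI conjI)
    show "(x ! p, Send a, z ! p) \<in> delta" using zn assms P_def by simp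
    show "R \<subseteq> {0..<length x} - {p}" unfolding R_def by auto
    show "\<forall>j\<in>R. (x ! j, Recv a, z ! j) \<in> delta" unfolding R_def using zn P_def by auto
    show "\<forall>j<length x. j \<notin> R \<and> j \<noteq> p \<longrightarrow> z ! j = x ! j" unfolding R_def using zn by auto
  qed (use assms lz zQ in auto)
  moreover have "(conf_step D Q delta)\<^sup>*\<^sup>* z y"
    by (rule send_only_steps[where a=a]) (use assms lz zQ zn P_def in auto)
  ultimately show ?thesis by (meson tranclp_rtranclp_tranclp tranclp.r_into_trancl)
qed



lemma path_back:
  assumes bwd: "\<forall>t<n. \<forall>q'\<in>F (Suc t). \<exists>q\<in>F t. mv t q q'"
  shows "t \<le> n \<Longrightarrow> q \<in> F t \<Longrightarrow> \<exists>h. h t = q \<and> (\<forall>t'\<le>t. h t' \<in> F t') \<and> (\<forall>t'<t. mv t' (h t') (h (Suc t')))"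
proof (induction t arbitrary: q)
  case 0
  then show ?case by (intro exI[of _ "\<lambda>_. q"]) auto
next
  case (Suc t)
  have "t < n" using Suc.prems by simp
  then obtain p where p: "p \<in> F t" "mv t p q" using bwd Suc.prems(2) by blast
  then obtain h where h: "h t = p" "\<forall>t'\<le>t. h t' \<in> F t'" "\<forall>t'<t. mv t' (h t') (h (Suc t'))"
    using Suc.IH[of p] Suc.prems(1) by auto
  show ?case
  proof (intro exI[of _ "h(Suc t := q)"] conjI allI impI)
    fix t' assume "t' \<le> Suc t" then show "(h(Suc t := q)) t' \<in> F t'"
      using h Suc.prems by (cases "t' = Suc t") auto
  next
    fix t' assume "t' < Suc t" then show "mv t' ((h(Suc t := q)) t') ((h(Suc t := q)) (Suc t'))"
      using h p by (cases "t' = t") auto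
  qed simp
qed

lemma path_fwd:
  assumes fwd: "\<forall>t<n. \<forall>q\<in>F t. \<exists>q'\<in>F (Suc t). mv t q q'"
  shows "d \<le> n \<Longrightarrow> q \<in> F (n-d) \<Longrightarrow> \<exists>h. h (n-d) = q \<and> (\<forall>t'. n-d \<le> t' \<and> t' \<le> n \<longrightarrow> h t' \<in> F t')
           \<and> (\<forall>t'. n-d \<le> t' \<and> t' < n \<longrightarrow> mv t' (h t') (h (Suc t')))"
proof (induction d arbitrary: q)
  case 0
  then show ?case by (intro exI[of _ "\<lambda>_. q"]) auto
next
  case (Suc d)
  define t0 where "t0 = n - Suc d"
  have t0: "Suc t0 = n - d" "t0 < n" using Suc.prems unfolding t0_def by auto
  have "q \<in> F t0" using Suc.prems unfolding t0_def by simp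
  then obtain p where p: "p \<in> F (Suc t0)" "mv t0 q p" using fwd t0(2) by blast
  then obtain h where h: "h (Suc t0) = p" "\<forall>t'. Suc t0 \<le> t' \<and> t' \<le> n \<longrightarrow> h t' \<in> F t'"
    "\<forall>t'. Suc t0 \<le> t' \<and> t' < n \<longrightarrow> mv t' (h t') (h (Suc t'))"
    using Suc.IH[of p] Suc.prems t0 by auto
  show ?case unfolding t0_def[symmetric]
  proof (intro exI[of _ "h(t0 := q)"] conjI allI impI)
    fix t' assume "t0 \<le> t' \<and> t' \<le> n" then show "(h(t0 := q)) t' \<in> F t'"
      using h Suc.prems unfolding t0_def by (cases "t' = t0") auto
  next
    fix t' assume "t0 \<le> t' \<and> t' < n" then show "mv t' ((h(t0 := q)) t') ((h(t0 := q)) (Suc t'))"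
      using h p by (cases "t' = t0") auto
  qed simp
qed

lemma full_path:
  assumes fwd: "\<forall>t<n. \<forall>q\<in>F t. \<exists>q'\<in>F (Suc t). mv t q q'"
    and bwd: "\<forall>t<n. \<forall>q'\<in>F (Suc t). \<exists>q\<in>F t. mv t q q'"
    and "t0 < n" "q0 \<in> F t0" "q1 \<in> F (Suc t0)" "mv t0 q0 q1"
  shows "\<exists>g. (\<forall>t\<le>n. g t \<in> F t) \<and> (\<forall>t<n. mv t (g t) (g (Suc t))) \<and> g t0 = q0 \<and> g (Suc t0) = q1"
proof -
  obtain h1 where h1: "h1 t0 = q0" "\<forall>t'\<le>t0. h1 t' \<in> F t'" "\<forall>t'<t0. mv t' (h1 t') (h1 (Suc t'))"
    using path_back[OF bwd, of t0 q0] assms by auto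
  have e: "n - (n - Suc t0) = Suc t0" using assms by auto
  obtain h2 where h2: "h2 (Suc t0) = q1" "\<forall>t'. Suc t0 \<le> t' \<and> t' \<le> n \<longrightarrow> h2 t' \<in> F t'"
    "\<forall>t'. Suc t0 \<le> t' \<and> t' < n \<longrightarrow> mv t' (h2 t') (h2 (Suc t'))"
    using path_fwd[OF fwd, of "n - Suc t0" q1] assms e by auto
  show ?thesis
  proof (intro exI[of _ "\<lambda>t. if t \<le> t0 then h1 t else h2 t"] conjI allI impI)
    fix t assume "t \<le> n" then show "(if t \<le> t0 then h1 t else h2 t) \<in> F t" using h1 h2 by auto
  next
    fix t assume t: "t < n"
    show "mv t (if t \<le> t0 then h1 t else h2 t) (if Suc t \<le> t0 then h1 (Suc t) else h2 (Suc t))"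
    proof (cases "t < t0")
      case True then show ?thesis using h1 by auto
    next
      case False
      show ?thesis
      proof (cases "t = t0")
        case True then show ?thesis using h1 h2 assms by auto
      next
        case False
        then show ?thesis using h2 t \<open>\<not> t < t0\<close> by auto
      qed
    qed
  qed (use h1 h2 in auto)
qed



lemma edge_props:
  assumes "G_edge D Q delta Ss Ss'"
  shows "G_vertex Q Ss \<and> G_vertex Q Ss' \<and> length Ss' = length Ss \<and>
    (\<exists>j s0 s1 a. j < length Ss \<and> s0 \<in> Ss!j \<and> s1 \<in> Ss'!j \<and> a \<in> D \<and> (s0, Send a, s1) \<in> delta \<and>
     (\<forall>i<length Ss. \<forall>q\<in>Ss!i. \<exists>q'\<in>Ss'!i. q = q' \<or> (q,Recv a,q')\<in>delta \<or> (q,Send a,q')\<in>delta) \<and>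
     (\<forall>i<length Ss. \<forall>q'\<in>Ss'!i. \<exists>q\<in>Ss!i. q = q' \<or> (q,Recv a,q')\<in>delta \<or> (q,Send a,q')\<in>delta))"
proof -
  from assms obtain j s0 s1 a Gen Kill U where
    v: "G_vertex Q Ss" "G_vertex Q Ss'" "length Ss' = length Ss" and
    j: "j < length Ss" "s0 \<in> Ss!j" "s1 \<in> Ss'!j" "a \<in> D" "(s0, Send a, s1) \<in> delta" and
    gk: "\<forall>i < length Ss.
              Gen i \<subseteq> Post_recv delta a (Ss ! i) \<and>
              Kill i \<subseteq> Enabled_recv delta a (Ss ! i) \<and>
              (i \<noteq> j \<longrightarrow> Ss' ! i = (Ss ! i - Kill i) \<union> Gen i) \<and>
              (\<forall>q \<in> Kill i. Post_recv delta a {q} \<inter> Gen i \<noteq> {})" and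
    U: "U = Ss ! j \<or> U = Ss ! j - {s0}" "Ss' ! j = (U - Kill j) \<union> Gen j \<union> {s1}"
    using assms unfolding G_edge_def apply - apply (elim conjE exE bexE)
    apply (rule that) by assumption+
  have genin: "Gen i \<subseteq> Ss'!i" if "i < length Ss" for i
    using gk that U by (cases "i = j") auto
  have fw: "\<exists>q'\<in>Ss'!i. q = q' \<or> (q,Recv a,q')\<in>delta \<or> (q,Send a,q')\<in>delta"
    if i: "i < length Ss" and q: "q \<in> Ss!i" for i q
  proof (cases "q \<in> Ss'!i")
    case True then show ?thesis by blast
  next
    case nq: False
    show ?thesis
    proof (cases "q \<in> Kill i")
      case True
      then have "Post_recv delta a {q} \<inter> Gen i \<noteq> {}" using gk i by blast
      then obtain q' where "q' \<in> Gen i" "(q, Recv a, q') \<in> delta" unfolding Post_recv_def by blast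
      then show ?thesis using genin[OF i] by blast
    next
      case False
      show ?thesis
      proof (cases "i = j")
        case True
        then have "q = s0" using nq False U q by auto
        then show ?thesis using j True by blast
      next
        case ij: False
        then show ?thesis using nq False gk i q by blast
      qed
    qed
  qed
  have bw: "\<exists>q\<in>Ss!i. q = q' \<or> (q,Recv a,q')\<in>delta \<or> (q,Send a,q')\<in>delta"
    if i: "i < length Ss" and q: "q' \<in> Ss'!i" for i q'
  proof (cases "q' \<in> Gen i")
    case True
    then have "q' \<in> Post_recv delta a (Ss ! i)" using gk i by blast
    then show ?thesis unfolding Post_recv_def by blast
  next
    case False
    show ?thesis
    proof (cases "i = j")
      case True
      then have "q' \<in> Ss!i \<or> q' = s1" using False U q by auto
      then show ?thesis using j True by blast
    next
      case ij: False
      then have "q' \<in> Ss!i" using False gk i q by blast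
      then show ?thesis by blast
    qed
  qed
  show ?thesis using v j fw bw by blast
qed



lemma dir1:
  assumes card: "length s \<le> card Q" and sQ: "set s \<subseteq> Q"
    and cyc: "(G_edge D Q delta)\<^sup>+\<^sup>+ (map (\<lambda>x. {x}) s) (map (\<lambda>x. {x}) s)"
  shows "\<exists>c. set c \<subseteq> Q \<and> set c = set s \<and> (conf_step D Q delta)\<^sup>+\<^sup>+ c c"
proof -
  define S0 where "S0 = map (\<lambda>x. {x}) s"
  define m where "m = length s"
  obtain n f where n: "n > 0" and f0: "f 0 = S0" and fn: "f n = S0"
    and fe: "\<forall>t<n. G_edge D Q delta (f t) (f (Suc t))"
    using cyc unfolding S0_def tranclp_power relpowp_fun_conv by blast
  have len: "t \<le> n \<Longrightarrow> length (f t) = m" for t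
  proof (induction t)
    case 0 then show ?case using f0 unfolding S0_def m_def by simp
  next
    case (Suc t)
    then have "G_edge D Q delta (f t) (f (Suc t))" using fe by simp
    then show ?case using edge_props[of D Q delta "f t" "f (Suc t)"] Suc by simp
  qed
  have vert: "G_vertex Q (f t)" if "t \<le> n" for t
  proof (cases "t < n")
    case True then show ?thesis using fe edge_props by blast
  next
    case False
    then have "t = Suc (n - 1)" using that n by simp
    moreover have "G_edge D Q delta (f (n-1)) (f (Suc (n-1)))" using fe[rule_format, of "n-1"] n by simp
    ultimately show ?thesis using edge_props by blast
  qed
  have fQ: "f t ! i \<subseteq> Q" if "t \<le> n" "i < m" for t i
    using vert[OF that(1)] len[OF that(1)] that(2) unfolding G_vertex_def by auto
  have fs: "f 0 ! i = {s!i}" "f n ! i = {s!i}" if "i < m" for i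
    using that f0 fn unfolding S0_def m_def by auto
  define P where "P t j s0 s1 a \<longleftrightarrow> j < m \<and> s0 \<in> f t ! j \<and> s1 \<in> f (Suc t) ! j \<and> a \<in> D \<and> (s0, Send a, s1) \<in> delta \<and>
     (\<forall>i<m. \<forall>q\<in>f t!i. \<exists>q'\<in>f (Suc t)!i. q = q' \<or> (q,Recv a,q')\<in>delta \<or> (q,Send a,q')\<in>delta) \<and>
     (\<forall>i<m. \<forall>q'\<in>f (Suc t)!i. \<exists>q\<in>f t!i. q = q' \<or> (q,Recv a,q')\<in>delta \<or> (q,Send a,q')\<in>delta)" for t j s0 s1 a
  have "\<forall>t. \<exists>x. t < n \<longrightarrow> P t (fst x) (fst (snd x)) (fst (snd (snd x))) (snd (snd (snd x)))"
  proof
    fix t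
    show "\<exists>x. t < n \<longrightarrow> P t (fst x) (fst (snd x)) (fst (snd (snd x))) (snd (snd (snd x)))"
    proof (cases "t < n")
      case True
      then have e: "G_edge D Q delta (f t) (f (Suc t))" using fe by simp
      have lt: "length (f t) = m" using len True by simp
      obtain j s0 s1 a where "P t j s0 s1 a"
        using edge_props[OF e] lt unfolding P_def by blast
      then show ?thesis by (intro exI[of _ "(j,s0,s1,a)"]) simp
    qed simp
  qed
  then obtain X where X: "\<forall>t. t < n \<longrightarrow> P t (fst (X t)) (fst (snd (X t))) (fst (snd (snd (X t)))) (snd (snd (snd (X t))))"
    by (metis choice)
  define J where "J t = fst (X t)" for t
  define SA where "SA t = fst (snd (X t))" for t
  define SB where "SB t = fst (snd (snd (X t)))" for t
  define A where "A t = snd (snd (snd (X t)))" for t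
  have PX: "P t (J t) (SA t) (SB t) (A t)" if "t < n" for t
    using X that unfolding J_def SA_def SB_def A_def by blast
  define mv where "mv t q q' \<longleftrightarrow> q = q' \<or> (q,Recv (A t),q')\<in>delta \<or> (q,Send (A t),q')\<in>delta" for t q q'
  have fw: "\<forall>t<n. \<forall>q\<in>f t ! i. \<exists>q'\<in>f (Suc t) ! i. mv t q q'" if "i < m" for i
    using PX that unfolding P_def mv_def by blast
  have bw: "\<forall>t<n. \<forall>q'\<in>f (Suc t) ! i. \<exists>q\<in>f t ! i. mv t q q'" if "i < m" for i
    using PX that unfolding P_def mv_def by blast
  define path where "path i g \<longleftrightarrow> (\<forall>t\<le>n. g t \<in> f t ! i) \<and> (\<forall>t<n. mv t (g t) (g (Suc t)))" for i g
  have ex_send: "\<exists>g. path (J t) g \<and> g t = SA t \<and> g (Suc t) = SB t" if "t < n" for t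
  proof -
    have "J t < m" "SA t \<in> f t ! J t" "SB t \<in> f (Suc t) ! J t" "mv t (SA t) (SB t)"
      using PX[OF that] unfolding P_def mv_def by auto
    then show ?thesis using full_path[OF fw bw, of "J t" t "SA t" "SB t"] that unfolding path_def by blast
  qed
  have ex_def: "\<exists>g. path i g" if im: "i < m" for i
  proof -
    have "s!i \<in> f 0 ! i" using fs im by simp
    then obtain q1 where "q1 \<in> f (Suc 0) ! i" "mv 0 (s!i) q1" using fw[OF im] n by blast
    then show ?thesis using full_path[OF fw[OF im] bw[OF im], of 0 "s!i" q1] n \<open>s!i \<in> f 0 ! i\<close>
      unfolding path_def by blast
  qed
  define Pd where "Pd i = (SOME g. path i g)" for i
  define Ps where "Ps t = (SOME g. path (J t) g \<and> g t = SA t \<and> g (Suc t) = SB t)" for t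
  have Pd: "path i (Pd i)" if "i < m" for i
    unfolding Pd_def using ex_def[OF that] by (rule someI_ex)
  have Ps: "path (J t) (Ps t) \<and> Ps t t = SA t \<and> Ps t (Suc t) = SB t" if "t < n" for t
    unfolding Ps_def using ex_send[OF that] by (rule someI_ex)
  have Jm: "J t < m" if "t < n" for t using PX[OF that] unfolding P_def by simp
  define procs where "procs = map Pd [0..<m] @ map Ps [0..<n]"
  have lp: "length procs = m + n" unfolding procs_def by simp
  have hp: "\<exists>i<m. path i g" if "g \<in> set procs" for g
  proof -
    from that consider (a) i where "i < m" "g = Pd i" | (b) t where "t < n" "g = Ps t"
      unfolding procs_def by auto
    then show ?thesis
    proof cases
      case a then show ?thesis using Pd by blast
    next
      case b then show ?thesis using Ps[of t] Jm[of t] by blast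
    qed
  qed
  have ends: "g 0 = g n \<and> g 0 \<in> set s" if gp: "g \<in> set procs" for g
  proof -
    obtain i where i: "i < m" "path i g" using hp[OF gp] by blast
    then have "g 0 \<in> f 0 ! i" "g n \<in> f n ! i" unfolding path_def by auto
    then show ?thesis using fs[OF i(1)] i(1) unfolding m_def by auto
  qed
  define C where "C t = map (\<lambda>g. g t) procs" for t
  have C0n: "C 0 = C n" unfolding C_def using ends by simp
  have setC: "set (C 0) = set s"
  proof
    show "set (C 0) \<subseteq> set s" unfolding C_def using ends by auto
  next
    show "set s \<subseteq> set (C 0)"
    proof
      fix x assume "x \<in> set s"
      then obtain i where i: "i < m" "x = s!i" unfolding m_def by (metis in_set_conv_nth)
      then have "Pd i 0 \<in> f 0 ! i" using Pd unfolding path_def by blast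
      then have "Pd i 0 = x" using fs i by simp
      moreover have "Pd i \<in> set procs" unfolding procs_def using i by simp
      ultimately show "x \<in> set (C 0)" unfolding C_def by force
    qed
  qed
  have CQ: "set (C t) \<subseteq> Q" if tn: "t \<le> n" for t
  proof
    fix x assume "x \<in> set (C t)"
    then obtain g where g: "g \<in> set procs" "x = g t" unfolding C_def by auto
    then obtain i where i: "i < m" "path i g" using hp by blast
    then have "g t \<in> f t ! i" using tn unfolding path_def by blast
    then show "x \<in> Q" using fQ[OF tn i(1)] g by blast
  qed
  have stepC: "(conf_step D Q delta)\<^sup>+\<^sup>+ (C t) (C (Suc t))" if t: "t < n" for t
  proof (rule main_step[where a = "A t" and p = "m + t"])
    show "length (C t) = length (C (Suc t))" unfolding C_def by simp
    show "set (C t) \<subseteq> Q" using CQ t by simp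
    show "set (C (Suc t)) \<subseteq> Q" using CQ t by simp
    show "A t \<in> D" using PX[OF t] unfolding P_def by simp
    show "m + t < length (C t)" unfolding C_def using lp t by simp
    have "procs ! (m + t) = Ps t" unfolding procs_def using t by (simp add: nth_append)
    then have "C t ! (m+t) = SA t" "C (Suc t) ! (m+t) = SB t"
      unfolding C_def using Ps[OF t] lp t by auto
    then show "(C t ! (m + t), Send (A t), C (Suc t) ! (m + t)) \<in> delta"
      using PX[OF t] unfolding P_def by simp
    show "\<forall>k<length (C t). C t ! k = C (Suc t) ! k \<or> (C t ! k, Recv (A t), C (Suc t) ! k) \<in> delta \<or>
                 (C t ! k, Send (A t), C (Suc t) ! k) \<in> delta"
    proof (intro allI impI)
      fix k assume k: "k < length (C t)"
      then have kp: "procs ! k \<in> set procs" unfolding C_def by simp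
      obtain i where "i < m" "path i (procs ! k)" using hp[OF kp] by blast
      then have "mv t ((procs ! k) t) ((procs ! k) (Suc t))" using t unfolding path_def by blast
      then show "C t ! k = C (Suc t) ! k \<or> (C t ! k, Recv (A t), C (Suc t) ! k) \<in> delta \<or>
                 (C t ! k, Send (A t), C (Suc t) ! k) \<in> delta"
        using k unfolding C_def mv_def by simp
    qed
  qed
  have chain: "0 < t \<Longrightarrow> t \<le> n \<Longrightarrow> (conf_step D Q delta)\<^sup>+\<^sup>+ (C 0) (C t)" for t
  proof (induction t)
    case 0 then show ?case by simp
  next
    case (Suc t)
    show ?case
    proof (cases "t = 0")
      case True then show ?thesis using stepC Suc.prems by simp
    next
      case False
      then have "(conf_step D Q delta)\<^sup>+\<^sup>+ (C 0) (C t)" using Suc by simp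
      moreover have "(conf_step D Q delta)\<^sup>+\<^sup>+ (C t) (C (Suc t))" using stepC Suc.prems by simp
      ultimately show ?thesis by (rule tranclp_trans)
    qed
  qed
  have "(conf_step D Q delta)\<^sup>+\<^sup>+ (C 0) (C 0)" using chain[of n] n C0n by simp
  then show ?thesis using setC CQ[of 0] by blast
qed



definition absG :: "(nat \<Rightarrow> nat) \<Rightarrow> nat \<Rightarrow> 'q list \<Rightarrow> 'q list \<Rightarrow> 'q set list" where
  "absG grp L s x = map (\<lambda>i. if \<exists>k<L. grp k = i then {x!k | k. k<L \<and> grp k = i} else {s!i}) [0..<length s]"

lemma abs_step:
  assumes step: "conf_step_lbl D Q delta a x y" and len: "length x = L"
    and grp: "\<forall>k<L. grp k < length s" and card: "length s \<le> card Q" and sQ: "set s \<subseteq> Q"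
  shows "G_edge D Q delta (absG grp L s x) (absG grp L s y)"
proof -
  from step obtain p R where aD: "a \<in> D" and ly: "length y = L" and xQ: "set x \<subseteq> Q" and yQ: "set y \<subseteq> Q"
    and p: "p < L" "(x!p, Send a, y!p) \<in> delta" and R: "R \<subseteq> {0..<L} - {p}"
    and Rr: "\<forall>k\<in>R. (x!k, Recv a, y!k) \<in> delta" and st: "\<forall>k<L. k \<notin> R \<and> k \<noteq> p \<longrightarrow> y!k = x!k"
    unfolding conf_step_lbl_def len by blast
  define m where "m = length s"
  define j where "j = grp p"
  define S where "S i = (if \<exists>k<L. grp k = i then {x!k | k. k<L \<and> grp k = i} else {s!i})" for i
  define S' where "S' i = (if \<exists>k<L. grp k = i then {y!k | k. k<L \<and> grp k = i} else {s!i})" for i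
  have ax: "absG grp L s x = map S [0..<m]" unfolding absG_def S_def m_def by simp
  have ay: "absG grp L s y = map S' [0..<m]" unfolding absG_def S'_def m_def by simp
  define Gen where "Gen i = {y!k | k. k \<in> R \<and> grp k = i}" for i
  define Kill where "Kill i = {q. (\<exists>k\<in>R. grp k = i \<and> x!k = q) \<and> (\<forall>k<L. grp k = i \<and> x!k = q \<longrightarrow> k \<in> R \<or> k = p)}" for i
  define U where "U = (if (\<forall>k<L. grp k = j \<and> x!k = x!p \<longrightarrow> k \<in> R \<or> k = p) then S j - {x!p} else S j)"
  have RL: "k \<in> R \<Longrightarrow> k < L \<and> k \<noteq> p" for k using R by auto
  have jm: "j < m" unfolding j_def m_def using grp p by simp
  have Sj: "S j = {x!k | k. k<L \<and> grp k = j}" "S' j = {y!k | k. k<L \<and> grp k = j}"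
    unfolding S_def S'_def j_def using p by auto
  have xpS: "x!p \<in> S j" using Sj(1) p unfolding j_def by auto
  have ypS: "y!p \<in> S' j" using Sj(2) p unfolding j_def by auto
  have SQ: "S i \<subseteq> Q" "S' i \<subseteq> Q" if "i < m" for i
    using xQ yQ sQ that len ly unfolding S_def S'_def m_def by (auto intro!: nth_mem)
  have gen1: "Gen i \<subseteq> Post_recv delta a (S i)" for i
  proof
    fix q assume "q \<in> Gen i"
    then obtain k where k: "k \<in> R" "grp k = i" "q = y!k" unfolding Gen_def by blast
    then have "x!k \<in> S i" using RL[OF k(1)] unfolding S_def by auto
    then show "q \<in> Post_recv delta a (S i)" using Rr k unfolding Post_recv_def by blast
  qed
  have kill1: "Kill i \<subseteq> Enabled_recv delta a (S i)" for i
  proof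
    fix q assume "q \<in> Kill i"
    then obtain k where k: "k \<in> R" "grp k = i" "q = x!k" unfolding Kill_def by blast
    then have "x!k \<in> S i" using RL[OF k(1)] unfolding S_def by auto
    then show "q \<in> Enabled_recv delta a (S i)" using Rr k unfolding Enabled_recv_def Post_recv_def by blast
  qed
  have kill2: "\<forall>q\<in>Kill i. Post_recv delta a {q} \<inter> Gen i \<noteq> {}" for i
  proof
    fix q assume "q \<in> Kill i"
    then obtain k where k: "k \<in> R" "grp k = i" "q = x!k" unfolding Kill_def by blast
    then have "y!k \<in> Post_recv delta a {q} \<inter> Gen i" using Rr unfolding Post_recv_def Gen_def by blast
    then show "Post_recv delta a {q} \<inter> Gen i \<noteq> {}" by blast
  qed
  have other: "S' i = (S i - Kill i) \<union> Gen i" if "i \<noteq> j" for i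
  proof (cases "\<exists>k<L. grp k = i")
    case False
    then have "Gen i = {}" "Kill i = {}" unfolding Gen_def Kill_def using RL by auto
    moreover have "S i = {s!i}" "S' i = {s!i}" unfolding S_def S'_def using False by auto
    ultimately show ?thesis by simp
  next
    case True
    have SS: "S i = {x!k | k. k<L \<and> grp k = i}" "S' i = {y!k | k. k<L \<and> grp k = i}"
      unfolding S_def S'_def using True by auto
    have np: "grp k = i \<Longrightarrow> k \<noteq> p" for k using that unfolding j_def by auto
    show ?thesis
    proof (rule set_eqI)
      fix q
      show "q \<in> S' i \<longleftrightarrow> q \<in> (S i - Kill i) \<union> Gen i"
      proof
        assume "q \<in> S' i"
        then obtain k where k: "k < L" "grp k = i" "q = y!k" unfolding SS by blast
        show "q \<in> (S i - Kill i) \<union> Gen i"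
        proof (cases "k \<in> R")
          case True then show ?thesis using k unfolding Gen_def by blast
        next
          case False
          have kp: "k \<noteq> p" using np[OF k(2)] .
          have "y!k = x!k" using st k(1) False kp by blast
          then have qx: "q = x!k" using k(3) by simp
          have "q \<notin> Kill i"
          proof
            assume "q \<in> Kill i"
            then have "\<forall>k<L. grp k = i \<and> x!k = q \<longrightarrow> k \<in> R \<or> k = p" unfolding Kill_def by simp
            then have "k \<in> R \<or> k = p" using k(1,2) qx by simp
            then show False using False kp by simp
          qed
          moreover have "q \<in> S i" using k qx unfolding SS by blast
          ultimately show ?thesis by blast
        qed
      next
        assume "q \<in> (S i - Kill i) \<union> Gen i"
        then consider "q \<in> Gen i" | "q \<in> S i" "q \<notin> Kill i" by blast
        then show "q \<in> S' i"
        proof cases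
          case 1 then show ?thesis unfolding Gen_def SS using RL by blast
        next
          case 2
          then obtain k where k: "k < L" "grp k = i" "q = x!k" unfolding SS by blast
          show ?thesis
          proof (cases "\<exists>k'\<in>R. grp k' = i \<and> x!k' = q")
            case True
            have "\<not> (\<forall>k<L. grp k = i \<and> x!k = q \<longrightarrow> k \<in> R \<or> k = p)"
              using 2(2) True unfolding Kill_def by blast
            then obtain k' where k': "k' < L" "grp k' = i" "x!k' = q" "k' \<notin> R" "k' \<noteq> p"
              by blast
            then have "y!k' = q" using st by simp
            then show ?thesis using k' unfolding SS by blast
          next
            case False
            then have "k \<notin> R" using k by blast
            then have "y!k = q" using st k np[OF k(2)] by simp
            then show ?thesis using k unfolding SS by blast
          qed
        qed
      qed
    qed
  qed
  have Uc: "U = S j \<or> U = S j - {x!p}" unfolding U_def by simp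
  have jeq: "S' j = (U - Kill j) \<union> Gen j \<union> {y!p}"
  proof (rule set_eqI)
    fix q
    show "q \<in> S' j \<longleftrightarrow> q \<in> (U - Kill j) \<union> Gen j \<union> {y!p}"
    proof
      assume "q \<in> S' j"
      then obtain k where k: "k < L" "grp k = j" "q = y!k" using Sj(2) by blast
      show "q \<in> (U - Kill j) \<union> Gen j \<union> {y!p}"
      proof (cases "k = p")
        case True then show ?thesis using k by blast
      next
        case kp: False
        show ?thesis
        proof (cases "k \<in> R")
          case True then show ?thesis using k unfolding Gen_def by blast
        next
          case False
          have "y!k = x!k" using st k(1) False kp by blast
          then have qx: "q = x!k" using k(3) by simp
          have "q \<notin> Kill j"
          proof
            assume "q \<in> Kill j"
            then have "\<forall>k<L. grp k = j \<and> x!k = q \<longrightarrow> k \<in> R \<or> k = p" unfolding Kill_def by simp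
            then have "k \<in> R \<or> k = p" using k(1,2) qx by simp
            then show False using False kp by simp
          qed
          moreover have "q \<in> U"
          proof -
            have qS: "q \<in> S j" using k qx Sj(1) by blast
            show ?thesis
            proof (cases "q = x!p")
              case True
              then have "\<not> (\<forall>k<L. grp k = j \<and> x!k = x!p \<longrightarrow> k \<in> R \<or> k = p)"
                using k(1,2) kp False qx by auto
              then show ?thesis using qS unfolding U_def by metis
            next
              case False
              then show ?thesis using qS unfolding U_def by simp
            qed
          qed
          ultimately show ?thesis by blast
        qed
      qed
    next
      assume "q \<in> (U - Kill j) \<union> Gen j \<union> {y!p}"
      then consider "q = y!p" | "q \<in> Gen j" | "q \<in> U" "q \<notin> Kill j" by blast
      then show "q \<in> S' j"
      proof cases
        case 1 then show ?thesis using ypS by simp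
      next
        case 2
        then obtain k where k: "k \<in> R" "grp k = j" "q = y!k" unfolding Gen_def by blast
        then show ?thesis using RL[OF k(1)] Sj(2) by blast
      next
        case 3
        have qS: "q \<in> S j" using 3(1) unfolding U_def by (simp split: if_splits)
        then obtain k where k: "k < L" "grp k = j" "q = x!k" using Sj(1) by blast
        show ?thesis
        proof (cases "\<exists>k'\<in>R. grp k' = j \<and> x!k' = q")
          case True
          have "\<not> (\<forall>k<L. grp k = j \<and> x!k = q \<longrightarrow> k \<in> R \<or> k = p)"
            using 3(2) True unfolding Kill_def by blast
          then obtain k' where k': "k' < L" "grp k' = j" "x!k' = q" "k' \<notin> R" "k' \<noteq> p"
            by blast
          then have "y!k' = q" using st by simp
          then show ?thesis using k' Sj(2) by blast
        next
          case False
          then have kR: "k \<notin> R" using k by blast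
          show ?thesis
          proof (cases "k = p")
            case False
            then have "y!k = q" using st k kR by simp
            then show ?thesis using k Sj(2) by blast
          next
            case True
            then have qp: "q = x!p" using k by simp
            have "\<not> (\<forall>k<L. grp k = j \<and> x!k = x!p \<longrightarrow> k \<in> R \<or> k = p)"
            proof
              assume "\<forall>k<L. grp k = j \<and> x!k = x!p \<longrightarrow> k \<in> R \<or> k = p"
              then have "U = S j - {x!p}" unfolding U_def by simp
              then show False using 3(1) qp by simp
            qed
            then obtain k' where k': "k' < L" "grp k' = j" "x!k' = x!p" "k' \<notin> R" "k' \<noteq> p" by blast
            then have "y!k' = q" using st qp by simp
            then show ?thesis using k' Sj(2) by blast
          qed
        qed
      qed
    qed
  qed
  have vx: "G_vertex Q (absG grp L s x)" "G_vertex Q (absG grp L s y)"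
    unfolding ax ay G_vertex_def using card SQ m_def by auto
  have lens: "length (absG grp L s y) = length (absG grp L s x)" "length (absG grp L s x) = m"
    unfolding ax ay by simp_all
  have nx: "absG grp L s x ! i = S i" "absG grp L s y ! i = S' i" if "i < m" for i
    unfolding ax ay using that by simp_all
  have allp: "\<forall>i<length (absG grp L s x).
              Gen i \<subseteq> Post_recv delta a (absG grp L s x ! i) \<and>
              Kill i \<subseteq> Enabled_recv delta a (absG grp L s x ! i) \<and>
              (i \<noteq> j \<longrightarrow> absG grp L s y ! i = (absG grp L s x ! i - Kill i) \<union> Gen i) \<and>
              (\<forall>q \<in> Kill i. Post_recv delta a {q} \<inter> Gen i \<noteq> {})"
    using gen1 kill1 kill2 other nx lens by simp
  show ?thesis
    unfolding G_edge_def
    apply (rule conjI[OF vx(1)], rule conjI[OF vx(2)], rule conjI[OF lens(1)])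
    apply (rule exI[of _ j], rule conjI, simp add: lens jm)
    apply (rule bexI[of _ "x!p"], rule bexI[of _ "y!p"], rule bexI[OF _ aD])
       apply (rule conjI[OF p(2)])
       apply (rule exI[of _ Gen], rule exI[of _ Kill], rule conjI[OF allp])
       apply (rule exI[of _ U])
    using Uc jeq nx jm xpS ypS by simp_all
qed



lemma dir2:
  assumes card: "length s \<le> card Q" and sQ: "set s \<subseteq> Q"
    and cs: "set c = set s" and cyc: "(conf_step D Q delta)\<^sup>+\<^sup>+ c c"
  shows "(G_edge D Q delta)\<^sup>+\<^sup>+ (map (\<lambda>x. {x}) s) (map (\<lambda>x. {x}) s)"
proof -
  obtain n h where n: "n > 0" and h0: "h 0 = c" and hn: "h n = c"
    and he: "\<forall>t<n. conf_step D Q delta (h t) (h (Suc t))"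
    using cyc unfolding tranclp_power relpowp_fun_conv by blast
  define L where "L = length c"
  have lens: "t \<le> n \<Longrightarrow> length (h t) = L" for t
  proof (induction t)
    case 0 then show ?case using h0 L_def by simp
  next
    case (Suc t)
    then have "conf_step D Q delta (h t) (h (Suc t))" using he by simp
    then show ?case using Suc unfolding conf_step_def conf_step_lbl_def by auto
  qed
  define grp where "grp k = (SOME i. i < length s \<and> s!i = c!k)" for k
  have grpP: "grp k < length s \<and> s!(grp k) = c!k" if "k < L" for k
  proof -
    have "c!k \<in> set s" using that cs L_def by (metis nth_mem)
    then have "\<exists>i. i < length s \<and> s!i = c!k" by (metis in_set_conv_nth)
    then show ?thesis unfolding grp_def by (rule someI_ex)
  qed
  have a0: "absG grp L s c = map (\<lambda>x. {x}) s"
  proof (rule nth_equalityI)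
    show "length (absG grp L s c) = length (map (\<lambda>x. {x}) s)" unfolding absG_def by simp
  next
    fix i assume "i < length (absG grp L s c)"
    then have i: "i < length s" unfolding absG_def by simp
    have ifeq: "(if \<exists>k<L. grp k = i then {c!k | k. k<L \<and> grp k = i} else {s!i}) = {s!i}"
    proof (cases "\<exists>k<L. grp k = i")
      case True
      have "{c!k | k. k<L \<and> grp k = i} = {s!i}"
      proof (rule set_eqI, rule iffI)
        fix q assume "q \<in> {c!k | k. k<L \<and> grp k = i}"
        then obtain k where "k < L" "grp k = i" "q = c!k" by blast
        then show "q \<in> {s!i}" using grpP[of k] by simp
      next
        fix q assume "q \<in> {s!i}"
        obtain k where k: "k < L" "grp k = i" using True by blast
        then have "c!k = q" using grpP[of k] \<open>q \<in> {s!i}\<close> by simp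
        then show "q \<in> {c!k | k. k<L \<and> grp k = i}" using k by blast
      qed
      then show ?thesis using True by simp
    qed auto
    have eq: "absG grp L s c ! i = (if \<exists>k<L. grp k = i then {c!k | k. k<L \<and> grp k = i} else {s!i})"
      unfolding absG_def using i by auto
    show "absG grp L s c ! i = map (\<lambda>x. {x}) s ! i" using eq ifeq i by simp
  qed
  have edges: "G_edge D Q delta (absG grp L s (h t)) (absG grp L s (h (Suc t)))" if t: "t < n" for t
  proof -
    obtain a where "conf_step_lbl D Q delta a (h t) (h (Suc t))" using he t unfolding conf_step_def by blast
    then show ?thesis by (rule abs_step) (use lens t grpP card sQ in auto)
  qed
  have "((G_edge D Q delta) ^^ n) (absG grp L s (h 0)) (absG grp L s (h n))"
    unfolding relpowp_fun_conv
    by (rule exI[of _ "\<lambda>t. absG grp L s (h t)"]) (use edges in simp)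
  then show ?thesis using n a0 h0 hn unfolding tranclp_power by auto
qed


theorem lemma2:
  fixes D :: "'d set" and Q I :: "'q set" and delta :: "('q \<times> 'd op \<times> 'q) set"
    and s :: "'q list"
  assumes "broadcast_network D Q I delta"
    and "length s \<le> card Q"
    and "set s \<subseteq> Q"
  shows "(G_edge D Q delta)\<^sup>+\<^sup>+ (map (\<lambda>x. {x}) s) (map (\<lambda>x. {x}) s) \<longleftrightarrow>
         (\<exists>c. set c \<subseteq> Q \<and> set c = set s \<and> (conf_step D Q delta)\<^sup>+\<^sup>+ c c)"
proof
  assume "(G_edge D Q delta)\<^sup>+\<^sup>+ (map (\<lambda>x. {x}) s) (map (\<lambda>x. {x}) s)"
  then show "\<exists>c. set c \<subseteq> Q \<and> set c = set s \<and> (conf_step D Q delta)\<^sup>+\<^sup>+ c c"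
    using dir1 assms(2,3) by blast
next
  assume "\<exists>c. set c \<subseteq> Q \<and> set c = set s \<and> (conf_step D Q delta)\<^sup>+\<^sup>+ c c"
  then obtain c where "set c = set s" "(conf_step D Q delta)\<^sup>+\<^sup>+ c c" by blast
  then show "(G_edge D Q delta)\<^sup>+\<^sup>+ (map (\<lambda>x. {x}) s) (map (\<lambda>x. {x}) s)"
    using dir2 assms(2,3) by blast
qed

end
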